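(* Let $\psi_C(t)=\exp[-t\tanh t]$, $\psi_S(t)=\exp[1-t\coth t]$ and $\psi_T(t)=\exp[\frac{2t}{\sinh(2t)}-1]$ (the background driving characteristic functions of $1/\cosh t$, $t/\sinh t$ and $\tanh t/t$ respectively). Their free analogues have Voiculescu transforms, for $t>0$: (a) $V_{\tilde\psi_C}(it)=i\big[\tfrac{t^2}{2}\zeta(2,\tfrac t2)-\tfrac{t^2}{4}\zeta(2,\tfrac t4)+1\big]$; (b) $V_{\tilde\psi_S}(it)=i\big[1+t-\tfrac12t^2\zeta(2,\tfrac t2)\big]$; (c) $V_{\tilde\psi_T}(it)=it\big[t\zeta(2,\tfrac t2)-\tfrac t4\zeta(2,\tfrac t4)-1\big]=it\big[\tfrac t4\zeta(2,\tfrac{t+2}{4})-1\big]$.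
   Context: $\zeta(s,a):=\sum_{k=0}^\infty(k+a)^{-s}$ is the Hurwitz zeta function ($s>1$, $a>0$). For an infinitely divisible characteristic function $\phi$ with Khintchine exponent $\log\phi$ (the continuous logarithm with $\log\phi(0)=0$; here e.g. $\log\psi_C(t)=-t\tanh t$), its free analogue $\tilde\phi$ is the $\boxplus$-infinitely divisible probability measure whose Voiculescu transform satisfies $V_{\tilde\phi}(it)=it^2\int_0^\infty\overline{\log\phi(s)}e^{-ts}ds$ for $t>0$. *)

theory Defs
  imports "HOL-Analysis.Analysis"
begin

definition hurwitz_zeta :: "real \<Rightarrow> real \<Rightarrow> real" where
  "hurwitz_zeta s a = (\<Sum>k. (real k + a) powr (- s))"

text \<open>Khintchine exponents (continuous logarithms, vanishing at 0) of the
  background driving characteristic functions psi_C, psi_S, psi_T.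
  At s = 0 we use the continuous extension (value 0).\<close>
definition logpsi_C :: "real \<Rightarrow> real" where
  "logpsi_C s = - s * tanh s"

definition logpsi_S :: "real \<Rightarrow> real" where
  "logpsi_S s = (if s = 0 then 0 else 1 - s * cosh s / sinh s)"

definition logpsi_T :: "real \<Rightarrow> real" where
  "logpsi_T s = (if s = 0 then 0 else 2 * s / sinh (2 * s) - 1)"

text \<open>Voiculescu transform of the free analogue, evaluated at i t (t > 0):
  V(it) = i t^2 int_0^infty conj(log phi(s)) e^{-ts} ds.\<close>
definition free_voiculescu_it :: "(real \<Rightarrow> complex) \<Rightarrow> real \<Rightarrow> complex" where
  "free_voiculescu_it logphi t =
     \<i> * complex_of_real (t^2) *
       (LINT s:{0..}|lborel. cnj (logphi s) * complex_of_real (exp (- t * s)))"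

end

theory Submission imports Defs "HOL-Probability.Probability" begin

lemma base_int:
  fixes a :: real and i :: nat
  assumes a: "a > 0"
  shows "set_integrable lborel {0..} (\<lambda>s. s^i * exp (- a * s))"
    "(LINT s:{0..}|lborel. s^i * exp (- a * s)) = fact i / a^(Suc i)"
proof -
  have eq: "\<And>x. indicator {0..} x *\<^sub>R (x^i * exp (- a * x)) = erlang_density 0 a x * x ^ i / a"
    using a by (auto simp: erlang_density_def split: split_indicator)
  have nn: "(\<integral>\<^sup>+ x. ennreal (erlang_density 0 a x * x ^ i / a) \<partial>lborel) = ennreal (fact i / a^(Suc i))"
  proof -
    have "(\<integral>\<^sup>+ x. ennreal (erlang_density 0 a x * x ^ i / a) \<partial>lborel)
        = (\<integral>\<^sup>+ x. ennreal (1/a) * ennreal (erlang_density 0 a x * x ^ i) \<partial>lborel)"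
      using a by (intro nn_integral_cong) (auto simp: ennreal_mult'[symmetric] erlang_density_def)
    also have "\<dots> = ennreal (1/a) * (\<integral>\<^sup>+ x. ennreal (erlang_density 0 a x * x ^ i) \<partial>lborel)"
      by (rule nn_integral_cmult) auto
    also have "\<dots> = ennreal (1/a) * ennreal (fact i / a ^ i)"
      using nn_integral_erlang_ith_moment[OF a, of 0 i] by simp
    also have "\<dots> = ennreal (fact i / a^(Suc i))"
      using a by (simp add: ennreal_mult'[symmetric] field_simps)
    finally show ?thesis .
  qed
  have m: "(\<lambda>x. erlang_density 0 a x * x ^ i / a) \<in> borel_measurable lborel" by measurable
  have nonneg: "AE x in lborel. 0 \<le> erlang_density 0 a x * x ^ i / a"
    using a by (auto simp: erlang_density_def)
  have r: "integrable lborel (\<lambda>x. erlang_density 0 a x * x ^ i / a) \<and>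
          integral\<^sup>L lborel (\<lambda>x. erlang_density 0 a x * x ^ i / a) = fact i / a^(Suc i)"
    using nn_integral_eq_integrable[OF m nonneg, of "fact i / a^(Suc i)"] nn a by auto
  show "set_integrable lborel {0..} (\<lambda>s. s^i * exp (- a * s))"
    unfolding set_integrable_def eq using r by simp
  show "(LINT s:{0..}|lborel. s^i * exp (- a * s)) = fact i / a^(Suc i)"
    unfolding set_lebesgue_integral_def eq using r by simp
qed

lemma interchange:
  fixes g :: "nat \<Rightarrow> real \<Rightarrow> real" and G :: "real \<Rightarrow> real"
  assumes int: "\<And>i. set_integrable lborel {0..} (g i)"
    and nn: "\<And>i s. s \<ge> 0 \<Longrightarrow> g i s \<ge> 0"
    and ps: "\<And>s. s \<ge> 0 \<Longrightarrow> (\<lambda>i. g i s) sums G s"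
    and cs: "(\<lambda>i. LINT s:{0..}|lborel. g i s) sums c"
  shows "set_integrable lborel {0..} G" "(LINT s:{0..}|lborel. G s) = c"
proof -
  define f where "f i s = indicator {0..} s * g i s" for i s
  have fi: "\<And>i. integrable lborel (f i)"
    using int unfolding set_integrable_def f_def by simp
  have fs: "AE x in lborel. summable (\<lambda>i. norm (f i x))"
  proof (rule AE_I2)
    fix x :: real
    show "summable (\<lambda>i. norm (f i x))"
    proof (cases "x \<ge> 0")
      case True
      then show ?thesis using ps[OF True] nn[OF True] by (simp add: f_def sums_iff)
    qed (simp add: f_def)
  qed
  have nf: "\<And>i. (\<integral>x. norm (f i x) \<partial>lborel) = (LINT s:{0..}|lborel. g i s)"
    unfolding set_lebesgue_integral_def f_def
    by (intro Bochner_Integration.integral_cong) (auto simp: nn split: split_indicator)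
  have cs2: "summable (\<lambda>i. (\<integral>x. norm (f i x) \<partial>lborel))"
    unfolding nf using cs by (simp add: sums_iff)
  have S: "\<And>x. (\<Sum>i. f i x) = indicator {0..} x * G x"
    using ps by (auto simp: f_def sums_iff split: split_indicator)
  have I: "integrable lborel (\<lambda>x. (\<Sum>i. f i x))"
    by (rule integrable_suminf[OF fi fs cs2])
  have J: "(\<lambda>i. integral\<^sup>L lborel (f i)) sums (\<integral>x. (\<Sum>i. f i x) \<partial>lborel)"
    by (rule sums_integral[OF fi fs cs2])
  show "set_integrable lborel {0..} G"
    using I unfolding set_integrable_def S by simp
  have "(\<lambda>i. integral\<^sup>L lborel (f i)) = (\<lambda>i. LINT s:{0..}|lborel. g i s)"
    unfolding set_lebesgue_integral_def f_def by simp
  with J cs show "(LINT s:{0..}|lborel. G s) = c"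
    unfolding S set_lebesgue_integral_def by (simp add: sums_unique2)
qed

lemma voic_real:
  "free_voiculescu_it (\<lambda>s. complex_of_real (f s)) t
     = \<i> * complex_of_real (t^2 * (LINT s:{0..}|lborel. f s * exp (- t * s)))"
proof -
  have "(\<lambda>s. cnj (complex_of_real (f s)) * complex_of_real (exp (- t * s)))
      = (\<lambda>s. complex_of_real (f s * exp (- t * s)))" by simp
  then show ?thesis
    unfolding free_voiculescu_it_def using set_integral_complex_of_real[where A="{0..}" and M=lborel and f="\<lambda>s. f s * exp (- t * s)"]
    by simp
qed

lemma cong_pos:
  fixes f g :: "real \<Rightarrow> real"
  assumes "\<And>s. s > 0 \<Longrightarrow> f s = g s" "set_integrable lborel {0..} g" and [measurable]: "f \<in> borel_measurable borel"
  shows "set_integrable lborel {0..} f" "(LINT s:{0..}|lborel. f s) = (LINT s:{0..}|lborel. g s)"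
proof -
  have ae: "AE x in lborel. indicator {0..} x *\<^sub>R g x = indicator {0..} x *\<^sub>R f x"
    using AE_lborel_singleton[of "0::real"]
    by eventually_elim (auto simp: assms(1) split: split_indicator)
  show "set_integrable lborel {0..} f"
    unfolding set_integrable_def
  proof (rule integrable_cong_AE_imp[OF _ _ ae])
    show "integrable lborel (\<lambda>x. indicator {0..} x *\<^sub>R g x)"
      using assms(2) unfolding set_integrable_def .
  qed measurable
  show "(LINT s:{0..}|lborel. f s) = (LINT s:{0..}|lborel. g s)"
  proof -
    have gm: "(\<lambda>x. indicator {0..} x *\<^sub>R g x) \<in> borel_measurable lborel"
      using assms(2) unfolding set_integrable_def by (rule borel_measurable_integrable)
    show ?thesis unfolding set_lebesgue_integral_def
    proof (rule integral_cong_AE[OF _ gm])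
      show "AE x in lborel. indicator {0..} x *\<^sub>R f x = indicator {0..} x *\<^sub>R g x"
        using ae by eventually_elim metis
    qed measurable
  qed
qed

lemma expq: "exp (- (t + c + 2 * real n) * s) = exp (- (t + c) * s) * exp (- 2 * s) ^ n"
proof -
  have "exp (- 2 * s) ^ n = exp (real n * (- 2 * s))" by (rule exp_of_nat_mult[symmetric])
  then show ?thesis by (simp add: exp_add[symmetric] algebra_simps)
qed

lemma meas: "(\<lambda>s. logpsi_C s * exp (- t * s)) \<in> borel_measurable borel"
   "(\<lambda>s. logpsi_S s * exp (- t * s)) \<in> borel_measurable borel"
   "(\<lambda>s. logpsi_T s * exp (- t * s)) \<in> borel_measurable borel"
  unfolding logpsi_C_def logpsi_S_def logpsi_T_def tanh_def cosh_def sinh_def by measurable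

lemma expq0: "exp (- (t + 2 * real n) * s) = exp (- t * s) * exp (- 2 * s) ^ n"
  using expq[of t 0 n s] by simp

lemma q_facts:
  fixes s :: real
  assumes "s > 0"
  shows "0 < exp (- 2 * s)" "exp (- 2 * s) < 1"
  using assms by auto

lemma alg1: assumes "(e::real) > 0" shows "((e - inverse e) / 2) / ((e + inverse e) / 2) = 1 - 2 * inverse e ^ 2 / (1 + inverse e ^ 2)"
proof -
  have "e*e + 1 > 0" using assms by (simp add: add_pos_nonneg)
  moreover have "e*2 + e*(e*(e*2)) > 0" using assms by (simp add: add_pos_pos)
  ultimately show ?thesis using assms by (simp add: field_simps power2_eq_square)
qed
lemma alg2: assumes "(e::real) > 1" shows "((e + inverse e) / 2) / ((e - inverse e) / 2) = 1 + 2 * inverse e ^ 2 / (1 - inverse e ^ 2)"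
proof -
  have "e*e > 1" using assms by (meson less_1_mult)
  then show ?thesis using assms by (simp add: field_simps power2_eq_square)
qed
lemma alg3: assumes "(e::real) > 1" shows "1 / ((e - inverse e) / 2) = 2 * inverse e / (1 - inverse e ^ 2)"
proof -
  have "e*e > 1" using assms by (meson less_1_mult)
  then show ?thesis using assms by (simp add: field_simps power2_eq_square)
qed

lemma sinh_real: "sinh (x::real) = (exp x - inverse (exp x)) / 2"
  by (simp add: sinh_def exp_minus)
lemma cosh_real: "cosh (x::real) = (exp x + inverse (exp x)) / 2"
  by (simp add: cosh_def exp_minus)
lemma exp2: "exp (- 2 * (s::real)) = inverse (exp s) ^ 2"
  by (simp add: exp_minus[symmetric] power2_eq_square exp_add[symmetric])

lemma tanh_q: "tanh (s::real) = 1 - 2 * exp (- 2 * s) / (1 + exp (- 2 * s))"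
  unfolding tanh_def sinh_real cosh_real exp2 by (rule alg1) simp

lemma coth_q: assumes "(s::real) > 0"
  shows "cosh s / sinh s = 1 + 2 * exp (- 2 * s) / (1 - exp (- 2 * s))"
  unfolding sinh_real cosh_real exp2 by (rule alg2) (use assms in simp)

lemma sinh2_q: assumes "(s::real) > 0"
  shows "1 / sinh (2 * s) = 2 * exp (- 2 * s) / (1 - exp (- 2 * s)^2)"
proof -
  have e: "exp (- 2 * s) = inverse (exp (2 * s))"
    by (simp add: exp_minus[symmetric])
  show ?thesis unfolding sinh_real e by (rule alg3) (use assms in simp)
qed

lemma sums_a:
  fixes s t :: real assumes s: "s \<ge> 0"
  shows "(\<lambda>j. 2 * (s^1 * exp (- (t + 2 * real (2*j+1)) * s)) - 2 * (s^1 * exp (- (t + 2 * real (2*j+2)) * s)))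
          sums (exp (- t * s) * (s - s * tanh s))"
proof (cases "s = 0")
  case True then show ?thesis by simp
next
  case False
  with s have sp: "s > 0" by simp
  define q where "q = exp (- 2 * s)"
  define E where "E = exp (- t * s)"
  have q0: "0 < q" "q < 1" using q_facts[OF sp] by (auto simp: q_def)
  have q2: "norm (q^2) < 1" using q0 by (simp add: abs_less_iff power_less_one_iff)
  have g: "(\<lambda>j. (2 * s * E*q*(1-q)) * (q^2)^j) sums ((2 * s * E*q*(1-q)) * (1 / (1 - q^2)))"
    by (rule sums_mult[OF geometric_sums[OF q2]])
  have eq1: "(\<lambda>j. 2 * (s^1 * exp (- (t + 2 * real (2*j+1)) * s)) - 2 * (s^1 * exp (- (t + 2 * real (2*j+2)) * s)))
     = (\<lambda>j. (2 * s * E*q*(1-q)) * (q^2)^j)"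
  proof
    fix j :: nat
    have a: "exp (- (t + 2 * real (2*j+1)) * s) = E * q^(2*j+1)" unfolding E_def q_def by (rule expq0)
    have b: "exp (- (t + 2 * real (2*j+2)) * s) = E * q^(2*j+2)" unfolding E_def q_def by (rule expq0)
    show "2 * (s^1 * exp (- (t + 2 * real (2*j+1)) * s)) - 2 * (s^1 * exp (- (t + 2 * real (2*j+2)) * s))
       = (2 * s * E*q*(1-q)) * (q^2)^j"
      unfolding a b by (simp add: power_mult[symmetric] power_add algebra_simps)
  qed
  have 1: "1 - q^2 = (1-q)*(1+q)" by (simp add: algebra_simps power2_eq_square)
  have "(2 * s * E*q*(1-q)) * (1 / (1 - q^2)) = E * (s - s * tanh s)"
  proof -
    have "q * q < 1" using q0 by (metis less_eq_real_def mult_le_one mult_less_cancel_right1 not_le)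
    then show ?thesis
      unfolding tanh_q q_def[symmetric] using q0 by (simp add: field_simps power2_eq_square)
  qed
  then show ?thesis using g unfolding eq1 E_def by simp
qed

lemma sums_b:
  fixes s t :: real assumes s: "s \<ge> 0"
  shows "(\<lambda>k. 2 * (s^1 * exp (- (t + 2 * real (k+1)) * s)))
          sums (exp (- t * s) * (s * cosh s / sinh s - s))"
proof (cases "s = 0")
  case True then show ?thesis by simp
next
  case False
  with s have sp: "s > 0" by simp
  define q where "q = exp (- 2 * s)"
  define E where "E = exp (- t * s)"
  have q0: "0 < q" "q < 1" using q_facts[OF sp] by (auto simp: q_def)
  have q2: "norm q < 1" using q0 by simp
  have g: "(\<lambda>j. (2 * s * E * q) * q^j) sums ((2 * s * E * q) * (1 / (1 - q)))"
    by (rule sums_mult[OF geometric_sums[OF q2]])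
  have eq1: "(\<lambda>k. 2 * (s^1 * exp (- (t + 2 * real (k+1)) * s)))
     = (\<lambda>j. (2 * s * E * q) * q^j)"
  proof
    fix j :: nat
    have a: "exp (- (t + 2 * real (j+1)) * s) = E * q^(j+1)" unfolding E_def q_def by (rule expq0)
    show "2 * (s^1 * exp (- (t + 2 * real (j+1)) * s)) = (2 * s * E * q) * q^j"
      unfolding a by (simp add: algebra_simps)
  qed
  have "(2 * s * E * q) * (1 / (1 - q)) = E * (s * cosh s / sinh s - s)"
  proof -
    have c: "s * cosh s / sinh s = s * (1 + 2 * q / (1 - q))"
      using coth_q[OF sp] unfolding q_def by (metis times_divide_eq_right)
    show ?thesis unfolding c using q0 by (simp add: field_simps)
  qed
  then show ?thesis using g unfolding eq1 E_def by simp
qed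

lemma sums_c:
  fixes s t :: real assumes s: "s \<ge> 0"
  shows "(\<lambda>k. 4 * (s^1 * exp (- (t + 2 * real (2*k+1)) * s)))
          sums (exp (- t * s) * (2 * s / sinh (2 * s)))"
proof (cases "s = 0")
  case True then show ?thesis by simp
next
  case False
  with s have sp: "s > 0" by simp
  define q where "q = exp (- 2 * s)"
  define E where "E = exp (- t * s)"
  have q0: "0 < q" "q < 1" using q_facts[OF sp] by (auto simp: q_def)
  have qq: "q * q < 1" using q0 by (metis less_eq_real_def mult_le_one mult_less_cancel_right1 not_le)
  have q2: "norm (q^2) < 1" using q0 by (simp add: abs_less_iff power_less_one_iff)
  have g: "(\<lambda>j. (4 * s * E * q) * (q^2)^j) sums ((4 * s * E * q) * (1 / (1 - q^2)))"
    by (rule sums_mult[OF geometric_sums[OF q2]])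
  have eq1: "(\<lambda>k. 4 * (s^1 * exp (- (t + 2 * real (2*k+1)) * s)))
     = (\<lambda>j. (4 * s * E * q) * (q^2)^j)"
  proof
    fix j :: nat
    have a: "exp (- (t + 2 * real (2*j+1)) * s) = E * q^(2*j+1)" unfolding E_def q_def by (rule expq0)
    show "4 * (s^1 * exp (- (t + 2 * real (2*j+1)) * s)) = (4 * s * E * q) * (q^2)^j"
      unfolding a by (simp add: power_mult[symmetric] algebra_simps)
  qed
  have "(4 * s * E * q) * (1 / (1 - q^2)) = E * (2 * s / sinh (2 * s))"
  proof -
    have c: "2 * s / sinh (2 * s) = 2 * s * (2 * q / (1 - q^2))"
      using sinh2_q[OF sp] unfolding q_def by (metis times_divide_eq_right mult_1_right)
    show ?thesis unfolding c using q0 qq by (simp add: field_simps power2_eq_square)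
  qed
  then show ?thesis using g unfolding eq1 E_def by simp
qed

definition u :: "real \<Rightarrow> nat \<Rightarrow> real" where "u t k = 1 / (t + 2 * real k)^2"

lemma u_pos: "t > 0 \<Longrightarrow> u t k > 0" by (simp add: u_def)

lemma summable_u: assumes t: "t > 0" shows "summable (u t)"
proof (rule summable_comparison_test'[where N=1])
  show "summable (\<lambda>n. inverse (real n ^ 2))" by (rule inverse_power_summable) simp
  fix n :: nat assume "n \<ge> 1"
  then have "real n \<le> t + 2 * real n" "real n > 0" using t by auto
  then show "norm (u t n) \<le> inverse (real n ^ 2)"
    unfolding u_def using t by (simp add: divide_simps power_mono)
qed

lemma summable_u_even: "t > 0 \<Longrightarrow> summable (\<lambda>j. u t (2*j))"
  by (rule summable_comparison_test'[OF summable_u, where N=0])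
     (auto simp: u_def divide_simps power_mono)

lemma summable_u_odd: "t > 0 \<Longrightarrow> summable (\<lambda>j. u t (2*j+1))"
  by (rule summable_comparison_test'[OF summable_u, where N=0])
     (auto simp: u_def divide_simps power_mono)

lemma u_split: assumes "t > 0" shows "suminf (u t) = suminf (\<lambda>j. u t (2*j)) + suminf (\<lambda>j. u t (2*j+1))"
proof -
  have s1: "(\<lambda>n. sum (u t) {n * 2..<n * 2 + 2}) sums suminf (u t)"
    by (rule sums_group[OF summable_sums[OF summable_u[OF assms]]]) simp
  have s2: "(\<lambda>n. sum (u t) {n * 2..<n * 2 + 2}) = (\<lambda>n. u t (2*n) + u t (2*n+1))"
  proof
    fix n :: nat
    have "{n * 2..<n * 2 + 2} = {2*n, 2*n+1}" by auto
    then show "sum (u t) {n * 2..<n * 2 + 2} = u t (2*n) + u t (2*n+1)" by (simp only: sum.insert_if) simp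
  qed
  have s3: "(\<lambda>n. u t (2*n) + u t (2*n+1)) sums (suminf (\<lambda>j. u t (2*j)) + suminf (\<lambda>j. u t (2*j+1)))"
    by (rule sums_add[OF summable_sums[OF summable_u_even[OF assms]] summable_sums[OF summable_u_odd[OF assms]]])
  show ?thesis using sums_unique2[OF s1[unfolded s2] s3] .
qed

lemma hz_term: "a > 0 \<Longrightarrow> (real k + a) powr (- 2) = 1 / (real k + a)^2"
  by (simp add: powr_minus divide_inverse powr_numeral)

lemma hz1: assumes t: "t > 0" shows "hurwitz_zeta 2 (t/2) = 4 * suminf (u t)"
proof -
  have "(\<lambda>k. (real k + t/2) powr (- 2)) = (\<lambda>k. 4 * u t k)"
  proof
    fix k :: nat
    have p: "t + 2 * real k > 0" using t by simp
    have "(real k + t/2) powr (- 2) = 1 / (real k + t/2)^2" by (rule hz_term) (use t in simp)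
    also have "\<dots> = 4 * u t k" unfolding u_def using p by (simp add: field_simps power2_eq_square)
    finally show "(real k + t/2) powr (- 2) = 4 * u t k" .
  qed
  then show ?thesis unfolding hurwitz_zeta_def using suminf_mult[OF summable_u[OF t], of 4] by simp
qed

lemma hz2: assumes t: "t > 0" shows "hurwitz_zeta 2 (t/4) = 16 * suminf (\<lambda>j. u t (2*j))"
proof -
  have "(\<lambda>k. (real k + t/4) powr (- 2)) = (\<lambda>k. 16 * u t (2*k))"
  proof
    fix k :: nat
    have p: "t + 2 * real (2*k) > 0" using t by simp
    have "(real k + t/4) powr (- 2) = 1 / (real k + t/4)^2" by (rule hz_term) (use t in simp)
    also have "\<dots> = 16 * u t (2*k)" unfolding u_def using p by (simp add: field_simps power2_eq_square)
    finally show "(real k + t/4) powr (- 2) = 16 * u t (2*k)" .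
  qed
  then show ?thesis unfolding hurwitz_zeta_def using suminf_mult[OF summable_u_even[OF t], of 16] by simp
qed

lemma hz3: assumes t: "t > 0" shows "hurwitz_zeta 2 ((t+2)/4) = 16 * suminf (\<lambda>j. u t (2*j+1))"
proof -
  have "(\<lambda>k. (real k + (t+2)/4) powr (- 2)) = (\<lambda>k. 16 * u t (2*k+1))"
  proof
    fix k :: nat
    have p: "t + 2 * real (2*k+1) > 0" using t by simp
    have "(real k + (t+2)/4) powr (- 2) = 1 / (real k + (t+2)/4)^2" by (rule hz_term) (use t in simp)
    also have "\<dots> = 16 * u t (2*k+1)" unfolding u_def using p by (simp add: field_simps power2_eq_square)
    finally show "(real k + (t+2)/4) powr (- 2) = 16 * u t (2*k+1)" .
  qed
  then show ?thesis unfolding hurwitz_zeta_def using suminf_mult[OF summable_u_odd[OF t], of 16] by simp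
qed

lemma term_int:
  assumes t: "t > 0"
  shows "set_integrable lborel {0..} (\<lambda>s. s^1 * exp (- (t + 2 * real k) * s))"
    "(LINT s:{0..}|lborel. s^1 * exp (- (t + 2 * real k) * s)) = u t k"
proof -
  have a: "t + 2 * real k > 0" using t by simp
  show "set_integrable lborel {0..} (\<lambda>s. s^1 * exp (- (t + 2 * real k) * s))"
    by (rule base_int(1)[OF a])
  show "(LINT s:{0..}|lborel. s^1 * exp (- (t + 2 * real k) * s)) = u t k"
    using base_int(2)[OF a, of 1] by (simp add: u_def power2_eq_square)
qed

lemma exp_anti: "(s::real) \<ge> 0 \<Longrightarrow> a \<le> b \<Longrightarrow> exp (- b * s) \<le> exp (- a * s)"
  by (simp add: mult_right_mono)

definition Ev where "Ev t = suminf (\<lambda>j. u t (2*j))"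
definition Od where "Od t = suminf (\<lambda>j. u t (2*j+1))"

lemma even_shift: assumes t: "t > 0" shows "(\<lambda>j. u t (2*j+2)) sums (Ev t - u t 0)"
proof -
  have "(\<lambda>j. u t (2*j)) sums (Ev t - u t 0 + u t 0)"
    unfolding Ev_def using summable_sums[OF summable_u_even[OF t]] by simp
  then have "(\<lambda>j. u t (2 * Suc j)) sums (Ev t - u t 0)"
    using sums_Suc_iff[of "\<lambda>j. u t (2*j)"] by simp
  moreover have "(\<lambda>j. u t (2 * Suc j)) = (\<lambda>j. u t (2*j+2))" by simp
  ultimately show ?thesis by simp
qed

lemma res_a: assumes t: "t > 0"
  shows "(LINT s:{0..}|lborel. logpsi_C s * exp (- t * s)) = 2 * Od t - 2 * (Ev t - u t 0) - 1 / t^2"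
proof -
  define g where "g j s = 2 * (s^1 * exp (- (t + 2 * real (2*j+1)) * s)) - 2 * (s^1 * exp (- (t + 2 * real (2*j+2)) * s))" for j s
  define G where "G s = exp (- t * s) * (s - s * tanh s)" for s
  have gi: "set_integrable lborel {0..} (g j)" for j
    unfolding g_def by (intro set_integral_diff(1) set_integrable_mult_right term_int(1)[OF t])
  have gint: "(LINT s:{0..}|lborel. g j s) = 2 * u t (2*j+1) - 2 * u t (2*j+2)" for j
  proof -
    note i1 = term_int[OF t, of "2*j+1"] and i2 = term_int[OF t, of "2*j+2"]
    show ?thesis unfolding g_def
      by (subst set_integral_diff(2)) (use i1 i2 in \<open>auto\<close>)
  qed
  have nn: "g j s \<ge> 0" if "s \<ge> 0" for j s
  proof -
    have "exp (- (t + 2 * real (2*j+2)) * s) \<le> exp (- (t + 2 * real (2*j+1)) * s)"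
      by (rule exp_anti) (use that in auto)
    then show ?thesis unfolding g_def using that by (simp add: mult_left_mono)
  qed
  have ps: "(\<lambda>j. g j s) sums G s" if "s \<ge> 0" for s
    unfolding g_def G_def using sums_a[OF that, of t] by simp
  have cs: "(\<lambda>j. LINT s:{0..}|lborel. g j s) sums (2 * Od t - 2 * (Ev t - u t 0))"
    unfolding gint
    by (intro sums_diff sums_mult even_shift[OF t])
       (use summable_sums[OF summable_u_odd[OF t]] in \<open>simp add: Od_def\<close>)
  note I = interchange[OF gi nn ps cs]
  have b: "set_integrable lborel {0..} (\<lambda>s. s^1 * exp (- t * s))" and
    bv: "(LINT s:{0..}|lborel. s^1 * exp (- t * s)) = 1 / t^2"
    using base_int[OF t, of 1] by (auto simp: power2_eq_square)
  have "(\<lambda>s. logpsi_C s * exp (- t * s)) = (\<lambda>s. G s - s^1 * exp (- t * s))"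
    by (auto simp: G_def logpsi_C_def algebra_simps)
  then show ?thesis
    using set_integral_diff(2)[OF I(1) b] I(2) bv by simp
qed

lemma res_b: assumes t: "t > 0"
  shows "(LINT s:{0..}|lborel. logpsi_S s * exp (- t * s)) = 1 / t - 1 / t^2 - 2 * (suminf (u t) - u t 0)"
proof -
  define g where "g k s = 2 * (s^1 * exp (- (t + 2 * real (k+1)) * s))" for k s
  define G where "G s = exp (- t * s) * (s * cosh s / sinh s - s)" for s
  have gi: "set_integrable lborel {0..} (g j)" for j
    unfolding g_def by (intro set_integrable_mult_right term_int(1)[OF t])
  have gint: "(LINT s:{0..}|lborel. g j s) = 2 * u t (Suc j)" for j
    unfolding g_def using term_int(2)[OF t, of "j+1"] by simp
  have nn: "g j s \<ge> 0" if "s \<ge> 0" for j s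
    unfolding g_def using that by simp
  have ps: "(\<lambda>j. g j s) sums G s" if "s \<ge> 0" for s
    unfolding g_def G_def using sums_b[OF that, of t] by simp
  have cs: "(\<lambda>j. LINT s:{0..}|lborel. g j s) sums (2 * (suminf (u t) - u t 0))"
  proof -
    have "u t sums (suminf (u t) - u t 0 + u t 0)"
      using summable_sums[OF summable_u[OF t]] by simp
    then have "(\<lambda>j. u t (Suc j)) sums (suminf (u t) - u t 0)"
      using sums_Suc_iff[of "u t"] by simp
    then show ?thesis unfolding gint by (rule sums_mult)
  qed
  note I = interchange[OF gi nn ps cs]
  have b: "set_integrable lborel {0..} (\<lambda>s. s^1 * exp (- t * s))" and
    bv: "(LINT s:{0..}|lborel. s^1 * exp (- t * s)) = 1 / t^2"
    using base_int[OF t, of 1] by (auto simp: power2_eq_square)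
  have b0: "set_integrable lborel {0..} (\<lambda>s. s^0 * exp (- t * s))" and
    bv0: "(LINT s:{0..}|lborel. s^0 * exp (- t * s)) = 1 / t"
    using base_int[OF t, of 0] by auto
  have i1: "set_integrable lborel {0..} (\<lambda>s. s^0 * exp (- t * s) - s^1 * exp (- t * s) - G s)"
    by (intro set_integral_diff(1) b0 b I(1))
  have "(LINT s:{0..}|lborel. logpsi_S s * exp (- t * s)) =
        (LINT s:{0..}|lborel. s^0 * exp (- t * s) - s^1 * exp (- t * s) - G s)"
    by (rule cong_pos(2)[OF _ i1 meas(2)]) (auto simp: G_def logpsi_S_def algebra_simps)
  also have "\<dots> = 1 / t - 1 / t^2 - 2 * (suminf (u t) - u t 0)"
    using set_integral_diff(2)[OF set_integral_diff(1)[OF b0 b] I(1)] set_integral_diff(2)[OF b0 b] I(2) bv bv0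
    by simp
  finally show ?thesis .
qed

lemma res_c: assumes t: "t > 0"
  shows "(LINT s:{0..}|lborel. logpsi_T s * exp (- t * s)) = 4 * Od t - 1 / t"
proof -
  define g where "g k s = 4 * (s^1 * exp (- (t + 2 * real (2*k+1)) * s))" for k s
  define G where "G s = exp (- t * s) * (2 * s / sinh (2 * s))" for s
  have gi: "set_integrable lborel {0..} (g j)" for j
    unfolding g_def by (intro set_integrable_mult_right term_int(1)[OF t])
  have gint: "(LINT s:{0..}|lborel. g j s) = 4 * u t (2*j+1)" for j
    unfolding g_def using term_int(2)[OF t, of "2*j+1"] by simp
  have nn: "g j s \<ge> 0" if "s \<ge> 0" for j s
    unfolding g_def using that by simp
  have ps: "(\<lambda>j. g j s) sums G s" if "s \<ge> 0" for s
    unfolding g_def G_def using sums_c[OF that, of t] by simp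
  have cs: "(\<lambda>j. LINT s:{0..}|lborel. g j s) sums (4 * Od t)"
    unfolding gint Od_def by (rule sums_mult[OF summable_sums[OF summable_u_odd[OF t]]])
  note I = interchange[OF gi nn ps cs]
  have b0: "set_integrable lborel {0..} (\<lambda>s. s^0 * exp (- t * s))" and
    bv0: "(LINT s:{0..}|lborel. s^0 * exp (- t * s)) = 1 / t"
    using base_int[OF t, of 0] by auto
  have i1: "set_integrable lborel {0..} (\<lambda>s. G s - s^0 * exp (- t * s))"
    by (intro set_integral_diff(1) b0 I(1))
  have "(LINT s:{0..}|lborel. logpsi_T s * exp (- t * s)) =
        (LINT s:{0..}|lborel. G s - s^0 * exp (- t * s))"
    by (rule cong_pos(2)[OF _ i1 meas(3)]) (auto simp: G_def logpsi_T_def algebra_simps)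
  also have "\<dots> = 4 * Od t - 1 / t"
    using set_integral_diff(2)[OF I(1) b0] I(2) bv0 by simp
  finally show ?thesis .
qed

theorem corollary5:
  fixes t :: real
  assumes "t > 0"
  shows "(free_voiculescu_it (\<lambda>s. complex_of_real (logpsi_C s)) t =
           \<i> * complex_of_real (t^2 / 2 * hurwitz_zeta 2 (t / 2)
                                - t^2 / 4 * hurwitz_zeta 2 (t / 4) + 1)) \<and>
         (free_voiculescu_it (\<lambda>s. complex_of_real (logpsi_S s)) t =
           \<i> * complex_of_real (1 + t - t^2 / 2 * hurwitz_zeta 2 (t / 2))) \<and>
         (free_voiculescu_it (\<lambda>s. complex_of_real (logpsi_T s)) t =
           \<i> * complex_of_real t * complex_of_real
              (t * hurwitz_zeta 2 (t / 2) - t / 4 * hurwitz_zeta 2 (t / 4) - 1)) \<and>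
         (free_voiculescu_it (\<lambda>s. complex_of_real (logpsi_T s)) t =
           \<i> * complex_of_real t * complex_of_real
              (t / 4 * hurwitz_zeta 2 ((t + 2) / 4) - 1))"
proof -
  have t: "t > 0" by (rule assms)
  have u0: "u t 0 = 1 / t^2" by (simp add: u_def)
  have S: "suminf (u t) = Ev t + Od t" using u_split[OF t] by (simp add: Ev_def Od_def)
  have z1: "hurwitz_zeta 2 (t/2) = 4 * (Ev t + Od t)" using hz1[OF t] S by simp
  have z2: "hurwitz_zeta 2 (t/4) = 16 * Ev t" using hz2[OF t] by (simp add: Ev_def)
  have z3: "hurwitz_zeta 2 ((t+2)/4) = 16 * Od t" using hz3[OF t] by (simp add: Od_def)
  have tz: "t \<noteq> 0" using t by simp
  have A: "t^2 * (2 * Od t - 2 * (Ev t - u t 0) - 1 / t^2) =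
      t^2 / 2 * hurwitz_zeta 2 (t / 2) - t^2 / 4 * hurwitz_zeta 2 (t / 4) + 1"
    unfolding z1 z2 u0 using tz by (simp add: field_simps)
  have B: "t^2 * (1 / t - 1 / t^2 - 2 * (suminf (u t) - u t 0)) = 1 + t - t^2 / 2 * hurwitz_zeta 2 (t / 2)"
    unfolding z1 S u0 using tz by (simp add: field_simps power2_eq_square)
  have C1: "t^2 * (4 * Od t - 1 / t) = t * (t * hurwitz_zeta 2 (t / 2) - t / 4 * hurwitz_zeta 2 (t / 4) - 1)"
    unfolding z1 z2 using tz by (simp add: field_simps power2_eq_square)
  have C2: "t^2 * (4 * Od t - 1 / t) = t * (t / 4 * hurwitz_zeta 2 ((t + 2) / 4) - 1)"
    unfolding z3 using tz by (simp add: field_simps power2_eq_square)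
  show ?thesis
    unfolding voic_real res_a[OF t] res_b[OF t] res_c[OF t]
  proof (intro conjI)
    show "\<i> * complex_of_real (t\<^sup>2 * (4 * Od t - 1 / t)) = \<i> * complex_of_real t * complex_of_real
              (t / 4 * hurwitz_zeta 2 ((t + 2) / 4) - 1)"
      by (simp only: C2 of_real_mult mult.assoc)
  qed (simp_all only: A B C1 of_real_mult mult.assoc)
qed

end
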